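(* Let $F(\mathcal A)$ be a free group on a finite set $\mathcal A$, let $\psi$ be an automorphism of $F(\mathcal A)$, and let $\Gamma=F(\mathcal A)\rtimes_{(\psi)}F(s,t)$, where $F(s,t)$ is free on $s,t$ and both $s$ and $t$ act by $\psi$ (i.e. $sas^{-1}=tat^{-1}=\psi(a)$). Let $P\colon\mathbb N\to\mathbb N$ be an increasing function such that $d_{\mathcal A}(1,\psi^n(a))\le P(|n|)$ for all $a\in\mathcal A$ and $n\in\mathbb Z$. Then the length function $L$ of the combing $\sigma^{F(s,t)}\cdot\sigma^{F(\mathcal A)}$ of $\Gamma$ satisfies $L(n)\le nP(n)+n$ for all $n$.
   Context: Every $\gamma\in\Gamma$ is uniquely $\gamma=u\cdot g$ with $u\in F(s,t)$, $g\in F(\mathcal A)$. The combing $\sigma^{F(s,t)}\cdot\sigma^{F(\mathcal A)}$ assigns to $\gamma$ the word $\sigma_\gamma$ obtained by concatenating the freely reduced word in $\{s,t\}^{\pm}$ representing $u$ with the freely reduced word in $\mathcal A^{\pm}$ representing $g$. Its length is $L(n)=\max\{|\sigma_\gamma|: d_{\mathcal A\cup\{s,t\}}(1,\gamma)\le n\}$, where $|\sigma_\gamma|$ is the word length of $\sigma_\gamma$ and $d_{\mathcal A\cup\{s,t\}}$, $d_{\mathcal A}$ are word metrics. *)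

theory Defs
  imports Main
begin

text \<open>A letter is a generator with a sign: (x, True) is x, (x, False) is x^-1.\<close>
type_synonym 'g word = "('g \<times> bool) list"

definition inv_letter :: "'g \<times> bool \<Rightarrow> 'g \<times> bool" where
  "inv_letter x = (fst x, \<not> snd x)"

definition inv_word :: "'g word \<Rightarrow> 'g word" where
  "inv_word w = rev (map inv_letter w)"

fun cancel_cons :: "'g \<times> bool \<Rightarrow> 'g word \<Rightarrow> 'g word" where
  "cancel_cons x [] = [x]"
| "cancel_cons x (y # ys) = (if y = inv_letter x then ys else x # y # ys)"

definition reduce :: "'g word \<Rightarrow> 'g word" where
  "reduce w = foldr cancel_cons w []"

fun reduced :: "'g word \<Rightarrow> bool" where
  "reduced (x # y # ys) = (y \<noteq> inv_letter x \<and> reduced (y # ys))"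
| "reduced _ = True"

definition words_on :: "'g set \<Rightarrow> 'g word set" where
  "words_on A = {w. fst ` set w \<subseteq> A}"

definition free_grp :: "'g set \<Rightarrow> 'g word set" where
  "free_grp A = {w. reduced w \<and> w \<in> words_on A}"

definition dist_free :: "'g set \<Rightarrow> 'g word \<Rightarrow> nat" where
  "dist_free A g = (LEAST k. \<exists>w \<in> words_on A. length w = k \<and> reduce w = g)"

definition subst_hom :: "('g \<Rightarrow> 'g word) \<Rightarrow> 'g word \<Rightarrow> 'g word" where
  "subst_hom \<psi> w = reduce (concat (map (\<lambda>(a, b). if b then \<psi> a else inv_word (\<psi> a)) w))"

definition is_aut :: "'g set \<Rightarrow> ('g \<Rightarrow> 'g word) \<Rightarrow> bool" where
  "is_aut A \<psi> \<longleftrightarrow> (\<forall>a \<in> A. \<psi> a \<in> free_grp A) \<and>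
                  bij_betw (subst_hom \<psi>) (free_grp A) (free_grp A)"

definition aut_pow :: "'g set \<Rightarrow> ('g \<Rightarrow> 'g word) \<Rightarrow> int \<Rightarrow> 'g word \<Rightarrow> 'g word" where
  "aut_pow A \<psi> n = (if 0 \<le> n then subst_hom \<psi> ^^ nat n
                     else inv_into (free_grp A) (subst_hom \<psi>) ^^ nat (- n))"

datatype st = S | T

text \<open>An element gamma = u * g of Gamma (u in F(s,t), g in F(A)) is represented by the
  pair (u, g) of freely reduced words. The relations are s a s^-1 = t a t^-1 = psi(a).\<close>
type_synonym 'g gam = "st word \<times> 'g word"

definition sgn_letter :: "st \<times> bool \<Rightarrow> int" where
  "sgn_letter x = (if snd x then 1 else -1)"

text \<open>Right multiplication by a generator of Gamma (from A \<union> {s,t}, or its inverse):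
  u g a^e = u (g a^e);  u g x^e = u x^e psi^{-e}(g) for x \<in> {s,t}.\<close>
fun mult_gen :: "'g set \<Rightarrow> ('g \<Rightarrow> 'g word) \<Rightarrow> 'g gam \<Rightarrow> ('g + st) \<times> bool \<Rightarrow> 'g gam" where
  "mult_gen A \<psi> (u, g) (Inl a, e) = (u, reduce (g @ [(a, e)]))"
| "mult_gen A \<psi> (u, g) (Inr x, e) =
     (reduce (u @ [(x, e)]), aut_pow A \<psi> (- sgn_letter (x, e)) g)"

definition gen_words :: "'g set \<Rightarrow> ('g + st) word set" where
  "gen_words A = {w. \<forall>x \<in> set w. \<forall>a. fst x = Inl a \<longrightarrow> a \<in> A}"

definition eval_gam :: "'g set \<Rightarrow> ('g \<Rightarrow> 'g word) \<Rightarrow> ('g + st) word \<Rightarrow> 'g gam" where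
  "eval_gam A \<psi> w = foldl (mult_gen A \<psi>) ([], []) w"

definition Gam :: "'g set \<Rightarrow> ('g \<Rightarrow> 'g word) \<Rightarrow> 'g gam set" where
  "Gam A \<psi> = eval_gam A \<psi> ` gen_words A"

definition dist_gam :: "'g set \<Rightarrow> ('g \<Rightarrow> 'g word) \<Rightarrow> 'g gam \<Rightarrow> nat" where
  "dist_gam A \<psi> \<gamma> = (LEAST k. \<exists>w \<in> gen_words A. length w = k \<and> eval_gam A \<psi> w = \<gamma>)"

definition comb :: "'g gam \<Rightarrow> ('g + st) word" where
  "comb \<gamma> = map (\<lambda>(x, e). (Inr x, e)) (fst \<gamma>) @ map (\<lambda>(a, e). (Inl a, e)) (snd \<gamma>)"

definition comb_length :: "'g set \<Rightarrow> ('g \<Rightarrow> 'g word) \<Rightarrow> nat \<Rightarrow> nat" where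
  "comb_length A \<psi> n = Max {length (comb \<gamma>) | \<gamma>. \<gamma> \<in> Gam A \<psi> \<and> dist_gam A \<psi> \<gamma> \<le> n}"

end

theory Submission imports Defs begin

lemma inv_inv[simp]: "inv_letter (inv_letter x) = x"
  by (cases x) (simp add: inv_letter_def)

lemma inv_word_inv_word[simp]: "inv_word (inv_word w) = w"
  unfolding inv_word_def by (simp add: rev_map comp_def)

lemma inv_word_append[simp]: "inv_word (a @ b) = inv_word b @ inv_word a"
  unfolding inv_word_def by simp

lemma inv_word_Cons[simp]: "inv_word (x # b) = inv_word b @ [inv_letter x]"
  unfolding inv_word_def by simp

lemma inv_word_Nil[simp]: "inv_word [] = []"
  unfolding inv_word_def by simp

lemma length_inv_word[simp]: "length (inv_word w) = length w"
  unfolding inv_word_def by simp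

lemma reduced_Cons: "reduced (x # w) \<longleftrightarrow> reduced w \<and> (w = [] \<or> hd w \<noteq> inv_letter x)"
  by (cases w) auto

lemma reduced_snoc: "reduced (w @ [y]) \<longleftrightarrow> reduced w \<and> (w = [] \<or> y \<noteq> inv_letter (last w))"
  by (induction w rule: reduced.induct) (auto simp: reduced_Cons)

lemma hd_inv_word: "w \<noteq> [] \<Longrightarrow> last (inv_word w) = inv_letter (hd w)"
  by (cases w) auto

lemma reduced_inv_word: "reduced w \<Longrightarrow> reduced (inv_word w)"
proof (induction w)
  case (Cons x w)
  show ?case
  proof (cases "w = []")
    case False
    then have "inv_word w \<noteq> []" by (simp add: inv_word_def)
    moreover have "inv_letter x = inv_letter y \<Longrightarrow> x = y" for y
      by (metis inv_inv)
    ultimately show ?thesis using Cons False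
      by (auto simp: reduced_snoc reduced_Cons hd_inv_word)
  qed simp
qed simp

lemma reduced_cc: "reduced z \<Longrightarrow> reduced (cancel_cons x z)"
  by (cases z) (auto simp: reduced_Cons)

lemma reduced_foldr: "reduced z \<Longrightarrow> reduced (foldr cancel_cons v z)"
  by (induction v) (auto simp: reduced_cc)

lemma reduced_reduce: "reduced (reduce w)"
  unfolding reduce_def by (rule reduced_foldr) simp

lemma reduce_Nil[simp]: "reduce [] = []"
  unfolding reduce_def by simp

lemma reduce_Cons: "reduce (x # w) = cancel_cons x (reduce w)"
  unfolding reduce_def by simp

lemma reduce_reduced: "reduced w \<Longrightarrow> reduce w = w"
proof (induction w)
  case (Cons x w)
  then show ?case by (cases w) (auto simp: reduce_Cons reduced_Cons)
qed simp

lemma cc_cancel: "reduced z \<Longrightarrow> cancel_cons x (cancel_cons (inv_letter x) z) = z"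
proof (cases z)
  case (Cons y ys)
  assume r: "reduced z"
  show ?thesis
  proof (cases "y = x")
    case True
    then show ?thesis using r Cons by (cases ys) auto
  qed (use Cons in auto)
qed simp

lemma foldr_cc_cc: "reduced r \<Longrightarrow> reduced z \<Longrightarrow>
   foldr cancel_cons (cancel_cons x r) z = cancel_cons x (foldr cancel_cons r z)"
proof (cases r)
  case (Cons y ys)
  assume "reduced r" "reduced z"
  then have "reduced ys" using Cons by (simp add: reduced_Cons)
  then show ?thesis using Cons \<open>reduced z\<close>
    by (auto simp: cc_cancel reduced_foldr)
qed simp

lemma foldr_reduce: "reduced z \<Longrightarrow> foldr cancel_cons (reduce v) z = foldr cancel_cons v z"
  by (induction v) (simp_all add: reduce_Cons foldr_cc_cc reduced_reduce)

lemma reduce_append: "reduce (v @ w) = foldr cancel_cons v (reduce w)"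
  unfolding reduce_def by simp

lemma reduce_mid: "reduce (a @ reduce v @ b) = reduce (a @ v @ b)"
  by (simp add: reduce_append foldr_reduce reduced_reduce)

lemma reduce_left: "reduce (reduce v @ b) = reduce (v @ b)"
  using reduce_mid[of "[]"] by simp

lemma reduce_right: "reduce (a @ reduce v) = reduce (a @ v)"
  using reduce_mid[of _ _ "[]"] by simp

lemma reduce_reduce[simp]: "reduce (reduce v) = reduce v"
  by (simp add: reduce_reduced reduced_reduce)

lemma reduce_cancel: "reduce (y @ inv_word y) = []"
proof (induction y)
  case (Cons c y)
  have "reduce ((c # y) @ inv_word (c # y)) = reduce ([c] @ (y @ inv_word y) @ [inv_letter c])"
    by simp
  also have "\<dots> = reduce ([c] @ reduce (y @ inv_word y) @ [inv_letter c])"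
    by (simp only: reduce_mid)
  also have "\<dots> = []" using Cons by (simp add: reduce_Cons)
  finally show ?case .
qed simp

lemma reduce_cancel2: "reduce (inv_word y @ y) = []"
  using reduce_cancel[of "inv_word y"] by simp

lemma reduce_inv_word: "reduce (inv_word w) = inv_word (reduce w)"
proof -
  let ?r = "reduce w"
  have "reduce (inv_word ?r @ w @ inv_word w) = reduce (inv_word ?r @ reduce (w @ inv_word w))"
    by (simp add: reduce_right)
  also have "\<dots> = inv_word ?r"
    by (simp add: reduce_cancel reduce_reduced reduced_inv_word reduced_reduce)
  finally have 1: "reduce (inv_word ?r @ w @ inv_word w) = inv_word ?r" .
  have "reduce (inv_word ?r @ w @ inv_word w) = reduce (inv_word ?r @ ?r @ inv_word w)"
    by (simp add: reduce_mid)
  also have "\<dots> = reduce (reduce (inv_word ?r @ ?r) @ inv_word w)"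
    using reduce_left[of "inv_word ?r @ ?r" "inv_word w"] by simp
  also have "\<dots> = reduce (inv_word w)" by (simp add: reduce_cancel2)
  finally show ?thesis using 1 by simp
qed

lemma set_cc: "set (cancel_cons x z) \<subseteq> insert x (set z)"
  by (cases z) auto

lemma set_reduce: "set (reduce w) \<subseteq> set w"
proof (induction w)
  case (Cons x w)
  then show ?case using set_cc[of x "reduce w"] by (auto simp: reduce_Cons)
qed simp

lemma length_cc: "length (cancel_cons x z) \<le> Suc (length z)"
  by (cases z) auto

lemma length_reduce: "length (reduce w) \<le> length w"
proof (induction w)
  case (Cons x w)
  then show ?case using length_cc[of x "reduce w"] by (auto simp: reduce_Cons)
qed simp


definition fimg :: "('g \<Rightarrow> 'g word) \<Rightarrow> 'g \<times> bool \<Rightarrow> 'g word" where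
  "fimg \<psi> = (\<lambda>(a, b). if b then \<psi> a else inv_word (\<psi> a))"

lemma subst_hom_alt: "subst_hom \<psi> w = reduce (concat (map (fimg \<psi>) w))"
  unfolding subst_hom_def fimg_def by simp

lemma fimg_inv: "fimg \<psi> (inv_letter x) = inv_word (fimg \<psi> x)"
  by (cases x) (auto simp: fimg_def inv_letter_def)

lemma img_cc: "reduce (concat (map (fimg \<psi>) (cancel_cons x r))) =
               reduce (concat (map (fimg \<psi>) (x # r)))"
proof (cases r)
  case (Cons y ys)
  show ?thesis
  proof (cases "y = inv_letter x")
    case True
    have "reduce (concat (map (fimg \<psi>) (x # r))) =
      reduce (reduce (fimg \<psi> x @ inv_word (fimg \<psi> x)) @ concat (map (fimg \<psi>) ys))"
      using Cons True by (simp add: fimg_inv reduce_left)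
    then show ?thesis using Cons True by (simp add: reduce_cancel)
  qed (use Cons in auto)
qed simp

lemma subst_hom_reduce: "subst_hom \<psi> (reduce v) = subst_hom \<psi> v"
proof (induction v)
  case (Cons x v)
  have "subst_hom \<psi> (reduce (x # v)) = reduce (fimg \<psi> x @ concat (map (fimg \<psi>) (reduce v)))"
    by (simp add: subst_hom_alt reduce_Cons img_cc)
  also have "\<dots> = reduce (fimg \<psi> x @ subst_hom \<psi> (reduce v))"
    by (simp add: subst_hom_alt reduce_right)
  also have "\<dots> = reduce (fimg \<psi> x @ subst_hom \<psi> v)" using Cons by simp
  also have "\<dots> = subst_hom \<psi> (x # v)"
    by (simp add: subst_hom_alt reduce_right)
  finally show ?case .
qed simp

lemma subst_hom_append: "subst_hom \<psi> (v @ w) = reduce (subst_hom \<psi> v @ subst_hom \<psi> w)"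
  by (simp add: subst_hom_alt reduce_left reduce_right)

lemma subst_hom_mult: "subst_hom \<psi> (reduce (v @ w)) = reduce (subst_hom \<psi> v @ subst_hom \<psi> w)"
  by (simp add: subst_hom_reduce subst_hom_append)

lemma subst_hom_Nil[simp]: "subst_hom \<psi> [] = []"
  by (simp add: subst_hom_alt)

lemma img_inv_word: "concat (map (fimg \<psi>) (inv_word v)) = inv_word (concat (map (fimg \<psi>) v))"
  by (induction v) (simp_all add: fimg_inv)

lemma subst_hom_inv: "subst_hom \<psi> (inv_word v) = inv_word (subst_hom \<psi> v)"
  by (simp add: subst_hom_alt img_inv_word reduce_inv_word)

lemma words_on_reduce: "w \<in> words_on A \<Longrightarrow> reduce w \<in> words_on A"
  using set_reduce[of w] unfolding words_on_def by auto

lemma free_grp_reduce: "w \<in> words_on A \<Longrightarrow> reduce w \<in> free_grp A"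
  by (simp add: free_grp_def words_on_reduce reduced_reduce)

lemma words_on_append: "x \<in> words_on A \<Longrightarrow> y \<in> words_on A \<Longrightarrow> x @ y \<in> words_on A"
  unfolding words_on_def by auto

lemma free_grp_words: "x \<in> free_grp A \<Longrightarrow> x \<in> words_on A"
  by (simp add: free_grp_def)

lemma free_grp_mult: "x \<in> free_grp A \<Longrightarrow> y \<in> free_grp A \<Longrightarrow> reduce (x @ y) \<in> free_grp A"
  by (simp add: free_grp_reduce words_on_append free_grp_words)

lemma free_grp_inv: "x \<in> free_grp A \<Longrightarrow> inv_word x \<in> free_grp A"
  unfolding free_grp_def words_on_def inv_word_def
  using reduced_inv_word[of x] by (auto simp: inv_word_def inv_letter_def)

lemma free_grp_Nil[simp]: "[] \<in> free_grp A"
  by (simp add: free_grp_def words_on_def)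

lemma free_grp_single: "a \<in> A \<Longrightarrow> [(a, e)] \<in> free_grp A"
  by (simp add: free_grp_def words_on_def)

lemma words_on_concat: "set L \<subseteq> free_grp A \<Longrightarrow> concat L \<in> words_on A"
  unfolding words_on_def free_grp_def by auto

context
  fixes A :: "'g set" and \<psi> :: "'g \<Rightarrow> 'g word"
  assumes aut: "is_aut A \<psi>"
begin

private abbreviation "h \<equiv> subst_hom \<psi>"
private abbreviation "F \<equiv> free_grp A"
private abbreviation "H' \<equiv> inv_into F h"

lemma bijh: "bij_betw h F F" using aut by (simp add: is_aut_def)

lemma h_F: "x \<in> F \<Longrightarrow> h x \<in> F"
  using bijh by (auto simp: bij_betw_def)

lemma H'_F: "x \<in> F \<Longrightarrow> H' x \<in> F"
  using bijh by (metis bij_betw_def bij_betw_inv_into bij_betw_apply)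

lemma h_H': "x \<in> F \<Longrightarrow> h (H' x) = x"
  using bijh by (simp add: bij_betw_def f_inv_into_f)

lemma H'_h: "x \<in> F \<Longrightarrow> H' (h x) = x"
  using bijh by (simp add: bij_betw_def inv_into_f_f)

lemma H'_eq: "y \<in> F \<Longrightarrow> x \<in> F \<Longrightarrow> h y = x \<Longrightarrow> H' x = y"
  using H'_h by auto

lemma H'_mult: "x \<in> F \<Longrightarrow> y \<in> F \<Longrightarrow> H' (reduce (x @ y)) = reduce (H' x @ H' y)"
  apply (rule H'_eq)
    apply (simp add: free_grp_mult H'_F)
   apply (simp add: free_grp_mult)
  apply (simp add: subst_hom_mult h_H')
  done

lemma H'_inv: "x \<in> F \<Longrightarrow> H' (inv_word x) = inv_word (H' x)"
  apply (rule H'_eq)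
    apply (simp add: free_grp_inv H'_F)
   apply (simp add: free_grp_inv)
  apply (simp add: subst_hom_inv h_H')
  done

lemma H'_Nil: "H' [] = []"
  by (rule H'_eq) auto

lemma h_mult: "x \<in> F \<Longrightarrow> y \<in> F \<Longrightarrow> h (reduce (x @ y)) = reduce (h x @ h y)"
  by (simp add: subst_hom_mult)

lemma funpow_F: "(\<And>x. x \<in> F \<Longrightarrow> f x \<in> F) \<Longrightarrow> x \<in> F \<Longrightarrow> (f ^^ n) x \<in> F"
  by (induction n) auto

lemma aut_pow_F: "x \<in> F \<Longrightarrow> aut_pow A \<psi> j x \<in> F"
  unfolding aut_pow_def using funpow_F h_F H'_F by auto

lemma aut_pow_1: "aut_pow A \<psi> 1 = h"
  by (simp add: aut_pow_def)

lemma aut_pow_m1: "aut_pow A \<psi> (-1) = H'"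
  by (simp add: aut_pow_def)

lemma aut_pow_0: "aut_pow A \<psi> 0 = id"
  by (simp add: aut_pow_def)

lemma aut_pow_neg: "j \<le> 0 \<Longrightarrow> aut_pow A \<psi> j = H' ^^ nat (- j)"
  by (cases "j = 0") (auto simp: aut_pow_def)

lemma aut_pow_up: "x \<in> F \<Longrightarrow> h (aut_pow A \<psi> j x) = aut_pow A \<psi> (j + 1) x"
proof (cases "0 \<le> j")
  case True
  then have "nat (j + 1) = Suc (nat j)" by simp
  then show ?thesis using True by (simp add: aut_pow_def)
next
  case False
  assume x: "x \<in> F"
  obtain n where n: "nat (- j) = Suc n" using False by (metis gr0_implies_Suc zero_less_nat_eq neg_0_less_iff_less linorder_not_le)
  have "nat (- (j + 1)) = n" using n by simp
  moreover have "j + 1 \<le> 0" using False by simp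
  ultimately have "aut_pow A \<psi> (j + 1) x = (H' ^^ n) x" by (simp add: aut_pow_neg)
  moreover have "aut_pow A \<psi> j x = H' ((H' ^^ n) x)" using False n by (simp add: aut_pow_def)
  ultimately show ?thesis using x by (simp add: h_H' funpow_F H'_F)
qed

lemma aut_pow_down: "x \<in> F \<Longrightarrow> H' (aut_pow A \<psi> j x) = aut_pow A \<psi> (j - 1) x"
proof (cases "j \<le> 0")
  case True
  then have "nat (- (j - 1)) = Suc (nat (- j))" by simp
  then show ?thesis using True by (simp add: aut_pow_neg)
next
  case False
  assume x: "x \<in> F"
  obtain n where n: "nat j = Suc n" using False by (metis gr0_implies_Suc zero_less_nat_eq linorder_not_le)
  have "nat (j - 1) = n" using n by simp
  moreover have "0 \<le> j - 1" using False by simp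
  ultimately have "aut_pow A \<psi> (j - 1) x = (h ^^ n) x" by (simp add: aut_pow_def)
  moreover have "aut_pow A \<psi> j x = h ((h ^^ n) x)" using False n by (simp add: aut_pow_def)
  ultimately show ?thesis using x by (simp add: H'_h funpow_F h_F)
qed

end


definition piece :: "'g set \<Rightarrow> ('g \<Rightarrow> 'g word) \<Rightarrow> ('g \<times> bool) \<times> int \<Rightarrow> 'g word" where
  "piece A \<psi> p = (if snd (fst p) then aut_pow A \<psi> (snd p) [(fst (fst p), True)]
                   else inv_word (aut_pow A \<psi> (snd p) [(fst (fst p), True)]))"

definition isS :: "('g + st) \<times> bool \<Rightarrow> bool" where
  "isS x = (case fst x of Inl _ \<Rightarrow> False | Inr _ \<Rightarrow> True)"

definition nS :: "('g + st) word \<Rightarrow> nat" where "nS w = length (filter isS w)"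
definition nA :: "('g + st) word \<Rightarrow> nat" where "nA w = length (filter (\<lambda>x. \<not> isS x) w)"

lemma nS_nA: "nS w + nA w = length w"
  unfolding nS_def nA_def by (rule sum_length_filter_compl)

lemma hom_concat:
  assumes "\<forall>x\<in>free_grp A. \<forall>y\<in>free_grp A. H (reduce (x @ y)) = reduce (H x @ H y)"
    and "H [] = []" and "set L \<subseteq> free_grp A"
  shows "H (reduce (concat L)) = reduce (concat (map H L))"
  using assms(3)
proof (induction L)
  case (Cons x L)
  have x: "x \<in> free_grp A" and L: "set L \<subseteq> free_grp A" using Cons by auto
  have r: "reduce (concat L) \<in> free_grp A" using L by (simp add: free_grp_reduce words_on_concat)
  have "H (reduce (concat (x # L))) = H (reduce (x @ reduce (concat L)))"
    by (simp add: reduce_right)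
  also have "\<dots> = reduce (H x @ H (reduce (concat L)))" using assms(1) x r by blast
  also have "\<dots> = reduce (concat (map H (x # L)))" using Cons L by (simp add: reduce_right)
  finally show ?case .
qed (simp add: assms(2))

lemma piece_F: "is_aut A \<psi> \<Longrightarrow> a \<in> A \<Longrightarrow> piece A \<psi> ((a, e), j) \<in> free_grp A"
  by (simp add: piece_def aut_pow_F free_grp_single free_grp_inv)

lemma gen_words_snoc: "w @ [x] \<in> gen_words A \<Longrightarrow> w \<in> gen_words A \<and> (\<forall>a. fst x = Inl a \<longrightarrow> a \<in> A)"
  unfolding gen_words_def by auto

lemma eval_snoc: "eval_gam A \<psi> (w @ [x]) = mult_gen A \<psi> (eval_gam A \<psi> w) x"
  unfolding eval_gam_def by simp

lemma shift_pieces: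
  assumes aut: "is_aut A \<psi>" and m: "m = 1 \<or> m = -1"
    and ps: "\<forall>p\<in>set ps. fst (fst p) \<in> A"
  shows "aut_pow A \<psi> m (reduce (concat (map (piece A \<psi>) ps))) =
         reduce (concat (map (piece A \<psi>) (map (\<lambda>p. (fst p, snd p + m)) ps)))"
proof -
  let ?H = "aut_pow A \<psi> m"
  have hom: "\<forall>x\<in>free_grp A. \<forall>y\<in>free_grp A. ?H (reduce (x @ y)) = reduce (?H x @ ?H y)"
    using m aut by (auto simp: aut_pow_1 aut_pow_m1 h_mult H'_mult)
  have nil: "?H [] = []" using m aut by (auto simp: aut_pow_1 aut_pow_m1 H'_Nil)
  have invh: "x \<in> free_grp A \<Longrightarrow> ?H (inv_word x) = inv_word (?H x)" for x
    using m aut by (auto simp: aut_pow_1 aut_pow_m1 H'_inv subst_hom_inv)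
  have sh: "x \<in> free_grp A \<Longrightarrow> ?H (aut_pow A \<psi> j x) = aut_pow A \<psi> (j + m) x" for x j
    using m aut aut_pow_up[OF aut] aut_pow_down[OF aut]
    by (auto simp: aut_pow_1 aut_pow_m1)
  have set: "set (map (piece A \<psi>) ps) \<subseteq> free_grp A"
    using ps piece_F[OF aut] by (auto simp: split_pairs)
  have pc: "p \<in> set ps \<Longrightarrow> ?H (piece A \<psi> p) = piece A \<psi> (fst p, snd p + m)" for p
    using ps by (auto simp: piece_def invh sh aut_pow_F[OF aut] free_grp_single)
  show ?thesis
    using hom_concat[OF hom nil set] pc by (simp add: comp_def cong: map_cong)
qed

lemma invariant:
  assumes aut: "is_aut A \<psi>" and w: "w \<in> gen_words A"
  shows "length (fst (eval_gam A \<psi> w)) \<le> nS w \<and>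
    (\<exists>ps. length ps = nA w \<and> (\<forall>p\<in>set ps. fst (fst p) \<in> A \<and> nat \<bar>snd p\<bar> \<le> nS w) \<and>
       snd (eval_gam A \<psi> w) = reduce (concat (map (piece A \<psi>) ps)))"
  using w
proof (induction w rule: rev_induct)
  case Nil
  show ?case by (auto simp: eval_gam_def nS_def nA_def)
next
  case (snoc x w)
  from gen_words_snoc[OF snoc.prems] have w: "w \<in> gen_words A"
    and xA: "\<forall>a. fst x = Inl a \<longrightarrow> a \<in> A" by auto
  obtain u g where ug: "eval_gam A \<psi> w = (u, g)" by fastforce
  from snoc.IH[OF w] ug obtain ps where
    lu: "length u \<le> nS w" and lps: "length ps = nA w"
    and pA: "\<forall>p\<in>set ps. fst (fst p) \<in> A \<and> nat \<bar>snd p\<bar> \<le> nS w"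
    and g: "g = reduce (concat (map (piece A \<psi>) ps))" by auto
  obtain y e where x: "x = (y, e)" by fastforce
  show ?case
  proof (cases y)
    case (Inl a)
    have a: "a \<in> A" using xA x Inl by auto
    have ns: "nS (w @ [x]) = nS w" "nA (w @ [x]) = Suc (nA w)"
      using x Inl by (auto simp: nS_def nA_def isS_def)
    have pc: "piece A \<psi> ((a, e), 0) = [(a, e)]"
      by (auto simp: piece_def aut_pow_def inv_word_def inv_letter_def)
    have "snd (eval_gam A \<psi> (w @ [x])) = reduce (g @ [(a, e)])"
      using x Inl ug by (simp add: eval_snoc)
    also have "\<dots> = reduce (concat (map (piece A \<psi>) (ps @ [((a, e), 0)])))"
      using g pc by (simp add: reduce_left)
    finally have 1: "snd (eval_gam A \<psi> (w @ [x])) = reduce (concat (map (piece A \<psi>) (ps @ [((a, e), 0)])))" .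
    have 2: "fst (eval_gam A \<psi> (w @ [x])) = u" using x Inl ug by (simp add: eval_snoc)
    show ?thesis
      apply (rule conjI)
      using 2 lu ns apply simp
      apply (rule exI[of _ "ps @ [((a, e), 0)]"])
      using 1 lps pA ns a by auto
  next
    case (Inr s)
    define m where "m = - sgn_letter (s, e)"
    have m: "m = 1 \<or> m = -1" by (auto simp: m_def sgn_letter_def)
    have ns: "nS (w @ [x]) = Suc (nS w)" "nA (w @ [x]) = nA w"
      using x Inr by (auto simp: nS_def nA_def isS_def)
    have e: "eval_gam A \<psi> (w @ [x]) = (reduce (u @ [(s, e)]), aut_pow A \<psi> m g)"
      using x Inr ug by (simp add: eval_snoc m_def)
    have l: "length (reduce (u @ [(s, e)])) \<le> Suc (nS w)"
      using length_reduce[of "u @ [(s, e)]"] lu by simp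
    have sp: "aut_pow A \<psi> m g = reduce (concat (map (piece A \<psi>) (map (\<lambda>p. (fst p, snd p + m)) ps)))"
      using shift_pieces[OF aut m] pA g by auto
    have bd: "\<forall>p\<in>set (map (\<lambda>p. (fst p, snd p + m)) ps). fst (fst p) \<in> A \<and> nat \<bar>snd p\<bar> \<le> Suc (nS w)"
      using pA m by fastforce
    show ?thesis
      apply (simp only: e ns fst_conv snd_conv)
      apply (rule conjI[OF l])
      apply (rule exI[of _ "map (\<lambda>p. (fst p, snd p + m)) ps"])
      using lps bd sp by simp
  qed
qed

lemma dist_free_ge: "g \<in> free_grp A \<Longrightarrow> length g \<le> dist_free A g"
proof -
  assume g: "g \<in> free_grp A"
  have ex: "\<exists>k. \<exists>w \<in> words_on A. length w = k \<and> reduce w = g"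
    using g by (auto simp: free_grp_def reduce_reduced intro!: exI[of _ "length g"] bexI[of _ g])
  from LeastI_ex[OF ex] obtain w where "length w = dist_free A g" "reduce w = g"
    unfolding dist_free_def by blast
  then show ?thesis using length_reduce[of w] by simp
qed

lemma sum_list_bound: "(\<forall>p\<in>set ps. f p \<le> c) \<Longrightarrow> sum_list (map f ps) \<le> length ps * (c::nat)"
  by (induction ps) auto

theorem proposition3p14:
  fixes A :: "'g set" and \<psi> :: "'g \<Rightarrow> 'g word" and P :: "nat \<Rightarrow> nat"
  assumes "finite A"
    and "is_aut A \<psi>"
    and "mono P"
    and "\<forall>a \<in> A. \<forall>n :: int. dist_free A (aut_pow A \<psi> n [(a, True)]) \<le> P (nat \<bar>n\<bar>)"
  shows "\<forall>n. comb_length A \<psi> n \<le> n * P n + n"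
proof
  fix n
  let ?S = "{length (comb \<gamma>) | \<gamma>. \<gamma> \<in> Gam A \<psi> \<and> dist_gam A \<psi> \<gamma> \<le> n}"
  have bound: "x \<le> n * P n + n" if "x \<in> ?S" for x
  proof -
    from that obtain \<gamma> where x: "x = length (comb \<gamma>)" and \<gamma>: "\<gamma> \<in> Gam A \<psi>"
      and d: "dist_gam A \<psi> \<gamma> \<le> n" by auto
    have ex: "\<exists>k. \<exists>w \<in> gen_words A. length w = k \<and> eval_gam A \<psi> w = \<gamma>"
      using \<gamma> by (auto simp: Gam_def)
    from LeastI_ex[OF ex] obtain w where w: "w \<in> gen_words A" and lw: "length w = dist_gam A \<psi> \<gamma>"
      and ev: "eval_gam A \<psi> w = \<gamma>"
      unfolding dist_gam_def by blast
    let ?k = "length w"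
    from invariant[OF assms(2) w] ev obtain ps where
      lu: "length (fst \<gamma>) \<le> nS w" and lps: "length ps = nA w"
      and pA: "\<forall>p\<in>set ps. fst (fst p) \<in> A \<and> nat \<bar>snd p\<bar> \<le> nS w"
      and g: "snd \<gamma> = reduce (concat (map (piece A \<psi>) ps))" by auto
    have pl: "length (piece A \<psi> p) \<le> P ?k" if "p \<in> set ps" for p
    proof -
      have a: "fst (fst p) \<in> A" and j: "nat \<bar>snd p\<bar> \<le> ?k"
        using pA that nS_nA[of w] by auto
      have "length (piece A \<psi> p) = length (aut_pow A \<psi> (snd p) [(fst (fst p), True)])"
        by (simp add: piece_def)
      also have "\<dots> \<le> dist_free A (aut_pow A \<psi> (snd p) [(fst (fst p), True)])"
        by (rule dist_free_ge) (simp add: aut_pow_F[OF assms(2)] free_grp_single a)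
      also have "\<dots> \<le> P (nat \<bar>snd p\<bar>)" using assms(4) a by blast
      also have "\<dots> \<le> P ?k" using assms(3) j by (simp add: monoD)
      finally show ?thesis .
    qed
    have "length (snd \<gamma>) \<le> length (concat (map (piece A \<psi>) ps))"
      using g length_reduce by simp
    also have "\<dots> = sum_list (map (\<lambda>p. length (piece A \<psi> p)) ps)"
      by (simp add: length_concat comp_def)
    also have "\<dots> \<le> length ps * P ?k" by (rule sum_list_bound) (use pl in auto)
    finally have lg: "length (snd \<gamma>) \<le> nA w * P ?k" using lps by simp
    have "x = length (fst \<gamma>) + length (snd \<gamma>)" by (simp add: x comb_def)
    also have "\<dots> \<le> nS w + nA w * P ?k" using lu lg by simp
    also have "\<dots> \<le> ?k + ?k * P ?k" using nS_nA[of w] by (simp add: add_mono)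
    also have "\<dots> \<le> n + n * P n"
      using lw d assms(3) by (simp add: add_mono mult_le_mono monoD)
    finally show ?thesis by simp
  qed
  have fin: "finite ?S" by (rule finite_subset[of _ "{..n * P n + n}"]) (use bound in auto)
  have "([], []) \<in> Gam A \<psi>"
    unfolding Gam_def by (rule image_eqI[of _ _ "[]"]) (auto simp: eval_gam_def gen_words_def)
  moreover have "dist_gam A \<psi> ([], []) \<le> n"
    unfolding dist_gam_def
    by (rule Least_le[THEN le_trans]) (auto simp: eval_gam_def gen_words_def intro!: bexI[of _ "[]"])
  ultimately have ne: "?S \<noteq> {}" by blast
  show "comb_length A \<psi> n \<le> n * P n + n"
    unfolding comb_length_def using fin ne bound by (simp add: Max_le_iff)
qed

end
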